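(* For any deterministic MDP with effective planning window $W$, there is an RL algorithm (which may depend on $W$) whose sample complexity on this MDP is at most $T^2A^W$.
   Context: Deterministic finite-horizon MDP $\mathcal M=(\mathcal S,\mathcal A,T,s_1,f,R)$: finite states, actions with $A=|\mathcal A|$, start state $s_1$, transitions $s_{t+1}=f(s_t,a_t)$, rewards $R(s_t,a_t)$, steps $t\in[T]$, no discounting; a policy is optimal if it maximizes $J(\pi)=\mathbb E_\pi[\sum_{t=1}^TR(s_t,a_t)]$. An RL algorithm knows $\mathcal A$ and $T$, interacts only by running episodes from $s_1$ (observing states and rewards), each episode counting $T$ timesteps; its sample complexity is the least $n$ such that its output after $n$ timesteps is optimal with probability at least $1/2$. Q-value iteration: $Q'=\mathrm{QVI}(Q)$ with $Q'_t(s,a)=R(s,a)+\max_{a'}Q_{t+1}(f(s,a),a')$ for $t<T$, $Q'_T(s,a)=R(s,a)$; $\Pi(Q)$ is the set of deterministic policies with $\pi_t(s)\in\arg\max_aQ_t(s,a)$ for all $s,t$. Define $Q^1_t(s,a)=R(s,a)$ for all $t$ and $Q^i=\mathrm{QVI}(Q^{i-1})$ for $i=2,\dots,T$. The effective planning window $W$ is the least $W\in[T]$ such that every policy in $\Pi(Q^W)$ is optimal. *)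

theory Defs
  imports "HOL-Probability.Probability"
begin

text \<open>The action set is the (finite, nonempty) type 'a, so A = CARD('a).
  States live in a type 's; the MDP's state space is a finite subset of it.\<close>

record ('s, 'a) mdp =
  states :: "'s set"
  start  :: 's
  trans  :: "'s \<Rightarrow> 'a \<Rightarrow> 's"
  rew    :: "'s \<Rightarrow> 'a \<Rightarrow> real"

definition wf_mdp :: "('s, 'a) mdp \<Rightarrow> bool" where
  "wf_mdp M \<longleftrightarrow> finite (states M) \<and> start M \<in> states M \<and>
     (\<forall>s\<in>states M. \<forall>a. trans M s a \<in> states M)"

text \<open>Deterministic (time-dependent, Markov) policies: pi t s, with t in {1..T}.\<close>
type_synonym ('s, 'a) policy = "nat \<Rightarrow> 's \<Rightarrow> 'a"

text \<open>pstate M pi n is the state at timestep n+1 when following pi from the start state.\<close>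
primrec pstate :: "('s, 'a) mdp \<Rightarrow> ('s, 'a) policy \<Rightarrow> nat \<Rightarrow> 's" where
  "pstate M \<pi> 0 = start M"
| "pstate M \<pi> (Suc n) = trans M (pstate M \<pi> n) (\<pi> (Suc n) (pstate M \<pi> n))"

definition J :: "('s, 'a) mdp \<Rightarrow> nat \<Rightarrow> ('s, 'a) policy \<Rightarrow> real" where
  "J M T \<pi> = (\<Sum>t\<in>{1..T}. rew M (pstate M \<pi> (t - 1)) (\<pi> t (pstate M \<pi> (t - 1))))"

definition optimal :: "('s, 'a) mdp \<Rightarrow> nat \<Rightarrow> ('s, 'a) policy \<Rightarrow> bool" where
  "optimal M T \<pi> \<longleftrightarrow> (\<forall>\<pi>'. J M T \<pi>' \<le> J M T \<pi>)"

type_synonym ('s, 'a) qfun = "nat \<Rightarrow> 's \<Rightarrow> 'a \<Rightarrow> real"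

definition QVI :: "('s, 'a::finite) mdp \<Rightarrow> nat \<Rightarrow> ('s, 'a) qfun \<Rightarrow> ('s, 'a) qfun" where
  "QVI M T Q = (\<lambda>t s a. if t < T
      then rew M s a + Max (range (\<lambda>a'. Q (Suc t) (trans M s a) a'))
      else rew M s a)"

definition Q1 :: "('s, 'a) mdp \<Rightarrow> ('s, 'a) qfun" where
  "Q1 M = (\<lambda>t s a. rew M s a)"

text \<open>Qiter M T i = Q^i, i.e. Q^1 followed by (i-1) applications of QVI.\<close>
definition Qiter :: "('s, 'a::finite) mdp \<Rightarrow> nat \<Rightarrow> nat \<Rightarrow> ('s, 'a) qfun" where
  "Qiter M T i = (QVI M T ^^ (i - 1)) (Q1 M)"

definition greedy_policies :: "('s, 'a) mdp \<Rightarrow> nat \<Rightarrow> ('s, 'a) qfun \<Rightarrow> ('s, 'a) policy set" where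
  "greedy_policies M T Q =
     {\<pi>. \<forall>t\<in>{1..T}. \<forall>s\<in>states M. \<forall>a. Q t s a \<le> Q t s (\<pi> t s)}"

definition window_ok :: "('s, 'a::finite) mdp \<Rightarrow> nat \<Rightarrow> nat \<Rightarrow> bool" where
  "window_ok M T W \<longleftrightarrow> (\<forall>\<pi>\<in>greedy_policies M T (Qiter M T W). optimal M T \<pi>)"

definition is_eff_window :: "('s, 'a::finite) mdp \<Rightarrow> nat \<Rightarrow> nat \<Rightarrow> bool" where
  "is_eff_window M T W \<longleftrightarrow> W \<in> {1..T} \<and> window_ok M T W \<and>
     (\<forall>W'\<in>{1..T}. W' < W \<longrightarrow> \<not> window_ok M T W')"

type_synonym ('s, 'a) episode = "('s \<times> 'a \<times> real) list"

record ('s, 'a) det_alg =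
  next_action :: "('s, 'a) episode list \<Rightarrow> ('s, 'a) episode \<Rightarrow> 's \<Rightarrow> 'a"
  out_policy :: "('s, 'a) episode list \<Rightarrow> ('s, 'a) policy"

primrec ep_prefix :: "('s, 'a) mdp \<Rightarrow> ('s, 'a) det_alg \<Rightarrow> ('s, 'a) episode list \<Rightarrow> nat
    \<Rightarrow> ('s, 'a) episode \<times> 's" where
  "ep_prefix M d h 0 = ([], start M)"
| "ep_prefix M d h (Suc n) =
     (let (p, s) = ep_prefix M d h n; a = next_action d h p s
      in (p @ [(s, a, rew M s a)], trans M s a))"

definition run_episode :: "('s, 'a) mdp \<Rightarrow> nat \<Rightarrow> ('s, 'a) det_alg \<Rightarrow> ('s, 'a) episode list
    \<Rightarrow> ('s, 'a) episode" where
  "run_episode M T d h = fst (ep_prefix M d h T)"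

primrec history :: "('s, 'a) mdp \<Rightarrow> nat \<Rightarrow> ('s, 'a) det_alg \<Rightarrow> nat \<Rightarrow> ('s, 'a) episode list" where
  "history M T d 0 = []"
| "history M T d (Suc k) = history M T d k @ [run_episode M T d (history M T d k)]"

text \<open>Each episode counts T timesteps, so after n timesteps, n div T episodes are complete.\<close>
definition output_after :: "('s, 'a) mdp \<Rightarrow> nat \<Rightarrow> ('s, 'a) det_alg \<Rightarrow> nat \<Rightarrow> ('s, 'a) policy" where
  "output_after M T d n = out_policy d (history M T d (n div T))"

text \<open>A (randomized) RL algorithm: a distribution over deterministic strategies
  (the random seed is drawn up front; the environment is deterministic).\<close>
type_synonym ('s, 'a) rl_alg = "('s, 'a) det_alg pmf"

definition success_prob :: "('s, 'a) mdp \<Rightarrow> nat \<Rightarrow> ('s, 'a) rl_alg \<Rightarrow> nat \<Rightarrow> real" where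
  "success_prob M T alg n = measure_pmf.prob alg {d. optimal M T (output_after M T d n)}"

definition sample_complexity :: "('s, 'a) mdp \<Rightarrow> nat \<Rightarrow> ('s, 'a) rl_alg \<Rightarrow> enat" where
  "sample_complexity M T alg =
     (if \<exists>n. success_prob M T alg n \<ge> 1/2
      then enat (LEAST n. success_prob M T alg n \<ge> 1/2) else \<infinity>)"

end

theory Submission
  imports Defs
begin

definition allacts :: "'a::finite list" where
  "allacts = (SOME xs. set xs = UNIV \<and> distinct xs)"

lemma allacts: "set (allacts::'a::finite list) = UNIV \<and> distinct (allacts::'a list)"
  unfolding allacts_def by (rule someI_ex) (rule finite_distinct_list, simp)

definition seqs :: "nat \<Rightarrow> 'a::finite list list" where
  "seqs W = List.n_lists W allacts"

lemma length_seqs: "length (seqs W :: 'a::finite list list) = CARD('a) ^ W"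
  using allacts[where 'a='a] by (simp add: seqs_def length_n_lists distinct_card[symmetric])

lemma set_seqs: "set (seqs W :: 'a::finite list list) = {ys. length ys = W}"
  using allacts[where 'a='a] by (simp add: seqs_def set_n_lists)

definition score :: "nat \<Rightarrow> nat \<Rightarrow> ('s, 'a::finite) episode list \<Rightarrow> nat \<Rightarrow> nat \<Rightarrow> real" where
  "score T W h t j = (\<Sum>i\<in>{t..<t + min W (T - t)}.
      snd (snd (h ! (t * length (seqs W :: 'a list list) + j) ! i)))"

definition best :: "nat \<Rightarrow> nat \<Rightarrow> ('s, 'a::finite) episode list \<Rightarrow> nat \<Rightarrow> nat" where
  "best T W h t = (SOME j. j < length (seqs W :: 'a list list) \<and>
     (\<forall>j'<length (seqs W :: 'a list list). score T W h t j' \<le> score T W h t j))"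

primrec chs :: "nat \<Rightarrow> nat \<Rightarrow> ('s, 'a::finite) episode list \<Rightarrow> nat \<Rightarrow> 'a list" where
  "chs T W h 0 = []"
| "chs T W h (Suc t) = chs T W h t @ [hd (seqs W ! best T W h t)]"

definition plan :: "nat \<Rightarrow> nat \<Rightarrow> ('s, 'a::finite) episode list \<Rightarrow> 'a list" where
  "plan T W h = chs T W h (length h div length (seqs W :: 'a list list))
     @ seqs W ! (length h mod length (seqs W :: 'a list list)) @ replicate T undefined"

definition alg :: "nat \<Rightarrow> nat \<Rightarrow> ('s, 'a::finite) det_alg" where
  "alg T W = \<lparr>next_action = (\<lambda>h p s. plan T W h ! length p),
              out_policy = (\<lambda>h t s. chs T W h T ! (t - 1))\<rparr>"

primrec ost :: "('s, 'a) mdp \<Rightarrow> 'a list \<Rightarrow> nat \<Rightarrow> 's" where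
  "ost M pl 0 = start M"
| "ost M pl (Suc n) = trans M (ost M pl n) (pl ! n)"

fun val :: "('s, 'a) mdp \<Rightarrow> 's \<Rightarrow> 'a list \<Rightarrow> nat \<Rightarrow> real" where
  "val M s [] n = 0"
| "val M s (a # w) 0 = 0"
| "val M s (a # w) (Suc n) = rew M s a + val M (trans M s a) w n"

lemma val_0[simp]: "val M s w 0 = 0"
  by (cases w) auto

lemma val_append: "m \<le> length w \<Longrightarrow> val M s (w @ v) m = val M s w m"
  by (induction M s w m rule: val.induct) auto

lemma ost_take: "\<forall>i<n. pl ! i = pl' ! i \<Longrightarrow> i \<le> n \<Longrightarrow> ost M pl i = ost M pl' i"
  by (induction i) auto

lemma ep_prefix_eq:
  assumes "\<And>p s. next_action d h p s = pl ! length p"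
  shows "ep_prefix M d h n =
    (map (\<lambda>r. (ost M pl r, pl ! r, rew M (ost M pl r) (pl ! r))) [0..<n], ost M pl n)"
  by (induction n) (auto simp: assms Let_def)

lemma sum_val:
  "p + m \<le> length pl \<Longrightarrow>
   (\<Sum>r\<in>{p..<p+m}. rew M (ost M pl r) (pl ! r)) = val M (ost M pl p) (drop p pl) m"
proof (induction m arbitrary: p)
  case 0 then show ?case by simp
next
  case (Suc m)
  have d: "drop p pl = pl ! p # drop (Suc p) pl" using Suc.prems by (simp add: Cons_nth_drop_Suc)
  have "{p..<p + Suc m} = insert p {Suc p..<Suc p + m}" by auto
  then have "(\<Sum>r\<in>{p..<p+Suc m}. rew M (ost M pl r) (pl ! r)) =
     rew M (ost M pl p) (pl ! p) + (\<Sum>r\<in>{Suc p..<Suc p+m}. rew M (ost M pl r) (pl ! r))"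
    by (simp only: sum.insert_if finite_atLeastLessThan) simp
  also have "\<dots> = rew M (ost M pl p) (pl ! p) + val M (ost M pl (Suc p)) (drop (Suc p) pl) m"
    using Suc.IH[of "Suc p"] Suc.prems by simp
  finally show ?case by (simp add: d)
qed

lemma length_history: "length (history M T d k) = k"
  by (induction k) auto

lemma history_prefix: "k \<le> k' \<Longrightarrow> i < k \<Longrightarrow> history M T d k' ! i = history M T d k ! i"
proof (induction k' rule: dec_induct)
  case base then show ?case by simp
next
  case (step n) then show ?case by (simp add: nth_append length_history)
qed

lemma history_nth: "i < k \<Longrightarrow> history M T d k ! i = run_episode M T d (history M T d i)"
  using history_prefix[of "Suc i" k i M T d] by (simp add: nth_append length_history)


lemma Qiter_1: "Qiter M T 1 = Q1 M"
  by (simp add: Qiter_def)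

lemma Qiter_Suc: "1 \<le> i \<Longrightarrow> Qiter M T (Suc i) = QVI M T (Qiter M T i)"
  by (cases i) (auto simp: Qiter_def)

lemma Q_char:
  fixes M :: "('s, 'a::finite) mdp"
  assumes "1 \<le> i"
  shows "1 \<le> t \<Longrightarrow> t \<le> T \<Longrightarrow>
    (\<forall>w. length w = i - 1 \<longrightarrow> val M s (a#w) (min i (Suc T - t)) \<le> Qiter M T i t s a) \<and>
    (\<exists>w. length w = i - 1 \<and> val M s (a#w) (min i (Suc T - t)) = Qiter M T i t s a)"
  using assms
proof (induction i arbitrary: t s a rule: nat_induct_at_least)
  case base
  have "min 1 (Suc T - t) = Suc 0" using base by simp
  then show ?case by (auto simp: Qiter_def Q1_def)
next
  case (Suc i t s a)
  show ?case
  proof (cases "t < T")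
    case True
    let ?F = "\<lambda>a'. Qiter M T i (Suc t) (trans M s a) a'"
    have Qeq: "Qiter M T (Suc i) t s a = rew M s a + Max (range ?F)"
      using True Suc.hyps by (simp add: Qiter_Suc QVI_def)
    have m: "min (Suc i) (Suc T - t) = Suc (min i (Suc T - Suc t))" using True by simp
    have IH: "\<And>a'. (\<forall>w. length w = i - 1 \<longrightarrow> val M (trans M s a) (a'#w) (min i (Suc T - Suc t)) \<le> ?F a') \<and>
      (\<exists>w. length w = i - 1 \<and> val M (trans M s a) (a'#w) (min i (Suc T - Suc t)) = ?F a')"
      using Suc.IH[of "Suc t"] True by simp
    have fin: "finite (range ?F)" by simp
    show ?thesis
    proof
      show "\<forall>w. length w = Suc i - 1 \<longrightarrow> val M s (a # w) (min (Suc i) (Suc T - t)) \<le> Qiter M T (Suc i) t s a"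
      proof (intro allI impI)
        fix w :: "'a list" assume lw: "length w = Suc i - 1"
        then obtain a' w' where w: "w = a' # w'" "length w' = i - 1" using Suc.hyps
          by (cases w) auto
        have "val M s (a # w) (min (Suc i) (Suc T - t)) = rew M s a + val M (trans M s a) (a'#w') (min i (Suc T - Suc t))"
          by (simp add: m w)
        also have "\<dots> \<le> rew M s a + ?F a'" using IH[of a'] w by simp
        also have "\<dots> \<le> rew M s a + Max (range ?F)" using fin by simp
        finally show "val M s (a # w) (min (Suc i) (Suc T - t)) \<le> Qiter M T (Suc i) t s a" using Qeq by simp
      qed
    next
      have "Max (range ?F) \<in> range ?F" using fin by (intro Max_in) auto
      then obtain a' where a': "Max (range ?F) = ?F a'" by (metis rangeE)
      obtain w' where w': "length w' = i - 1" "val M (trans M s a) (a'#w') (min i (Suc T - Suc t)) = ?F a'"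
        using IH[of a'] by blast
      show "\<exists>w. length w = Suc i - 1 \<and> val M s (a # w) (min (Suc i) (Suc T - t)) = Qiter M T (Suc i) t s a"
        using w' a' Suc.hyps by (intro exI[of _ "a'#w'"]) (simp add: m Qeq)
    qed
  next
    case False
    then have tT: "t = T" using Suc.prems by simp
    have Qeq: "Qiter M T (Suc i) t s a = rew M s a"
      using tT Suc.hyps by (simp add: Qiter_Suc QVI_def)
    have m: "min (Suc i) (Suc T - t) = Suc 0" using tT by simp
    have v: "\<And>w. val M s (a # w) (Suc 0) = rew M s a" by simp
    show ?thesis using Qeq m v by (auto intro: exI[of _ "replicate i a"])
  qed
qed

lemma length_chs[simp]: "length (chs T W h t) = t"
  by (induction t) auto

lemma take_chs: "t \<le> t' \<Longrightarrow> take t (chs T W h t') = chs T W h t"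
proof (induction t' rule: dec_induct)
  case base then show ?case by simp
next
  case (step n) then show ?case by (simp add: take_append)
qed

lemma chs_stable:
  fixes h h' :: "('s, 'a::finite) episode list"
  shows "(\<forall>i < t * length (seqs W :: 'a list list). h ! i = h' ! i) \<Longrightarrow> chs T W h t = chs T W h' t"
proof (induction t)
  case 0 then show ?case by simp
next
  case (Suc t)
  let ?N = "length (seqs W :: 'a list list)"
  have sc: "\<And>j. j < ?N \<Longrightarrow> score T W h t j = score T W h' t j"
  proof -
    fix j assume j: "j < ?N"
    have "t * ?N + j < Suc t * ?N" using j by simp
    then have "h ! (t * ?N + j) = h' ! (t * ?N + j)" using Suc.prems by blast
    then show "score T W h t j = score T W h' t j" by (simp add: score_def)
  qed
  have "best T W h t = best T W h' t"
    unfolding best_def using sc by (metis (no_types, lifting))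
  moreover have "chs T W h t = chs T W h' t"
  proof (rule Suc.IH, intro allI impI)
    fix i assume "i < t * ?N"
    moreover have "t * ?N \<le> Suc t * ?N" by simp
    ultimately show "h ! i = h' ! i" using Suc.prems by auto
  qed
  ultimately show ?case by simp
qed

lemma ex_best: "(0::nat) < N \<Longrightarrow> \<exists>j<N. \<forall>j'<N. (f j' :: real) \<le> f j"
proof -
  assume N: "0 < N"
  have "Max (f ` {..<N}) \<in> f ` {..<N}" using N by (intro Max_in) auto
  then obtain j where j: "j < N" "f j = Max (f ` {..<N})" by auto
  then show ?thesis by (intro exI[of _ j]) auto
qed

lemma run_episode_eq:
  "run_episode M T (alg T W) h =
    map (\<lambda>r. (ost M (plan T W h) r, plan T W h ! r, rew M (ost M (plan T W h) r) (plan T W h ! r))) [0..<T]"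
  unfolding run_episode_def by (subst ep_prefix_eq[where pl="plan T W h"]) (auto simp: alg_def)

lemma alpha_greedy:
  fixes M :: "('s, 'a::finite) mdp"
  assumes W1: "1 \<le> W" and pT: "p < T"
  defines "\<alpha> \<equiv> chs T W (history M T (alg T W) (T * length (seqs W :: 'a list list))) T"
  shows "Qiter M T W (Suc p) (ost M \<alpha> p) a' \<le> Qiter M T W (Suc p) (ost M \<alpha> p) (\<alpha> ! p)"
proof -
  define N where "N = length (seqs W :: 'a list list)"
  define H where "H = history M T (alg T W :: ('s,'a) det_alg)"
  define m where "m = min W (T - p)"
  have N0: "0 < N" unfolding N_def length_seqs by simp
  have lenseq: "\<And>j. j < N \<Longrightarrow> length (seqs W ! j :: 'a list) = W"
  proof -
    fix j assume "j < N"
    then have "seqs W ! j \<in> set (seqs W :: 'a list list)" unfolding N_def by simp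
    then show "length (seqs W ! j :: 'a list) = W" using set_seqs[where 'a='a] by auto
  qed
  have la: "length \<alpha> = T" by (simp add: \<alpha>_def)
  have sc: "score T W (H (T * N)) p j = val M (ost M \<alpha> p) (seqs W ! j) m" if j: "j < N" for j
  proof -
    have idx: "p * N + j < T * N"
    proof -
      have "p * N + j < p * N + N" using j by simp
      also have "\<dots> = Suc p * N" by simp
      also have "\<dots> \<le> T * N" using pT by (intro mult_le_mono1) simp
      finally show ?thesis .
    qed
    define h where "h = H (p * N + j)"
    define pl where "pl = plan T W h"
    have lh: "length h = p * N + j" by (simp add: h_def H_def length_history)
    have dv: "length h div N = p" "length h mod N = j" using lh j by auto
    have ep: "H (T * N) ! (p * N + j) = run_episode M T (alg T W) h"
      unfolding H_def h_def using idx by (rule history_nth)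
    have chs_eq: "chs T W h p = take p \<alpha>"
    proof -
      have "chs T W h p = chs T W (H (T * N)) p"
      proof (rule chs_stable, intro allI impI)
        fix i assume "i < p * length (seqs W :: 'a list list)"
        then have "i < p * N + j" by (simp add: N_def)
        then show "h ! i = H (T * N) ! i"
          unfolding h_def H_def using history_prefix[of "p*N+j" "T*N" i M T "alg T W"] idx by simp
      qed
      also have "\<dots> = take p \<alpha>" unfolding \<alpha>_def H_def N_def using pT by (simp add: take_chs)
      finally show ?thesis .
    qed
    have pl: "pl = take p \<alpha> @ seqs W ! j @ replicate T undefined"
      unfolding pl_def plan_def using dv chs_eq N_def by simp
    have lpl: "length pl = p + W + T" using pl la pT lenseq[OF j] by simp
    have mT: "p + m \<le> T" unfolding m_def using pT by simp
    have "score T W (H (T * N)) p j = (\<Sum>i\<in>{p..<p + m}. snd (snd (H (T * N) ! (p * N + j) ! i)))"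
      by (simp add: score_def N_def m_def)
    also have "\<dots> = (\<Sum>i\<in>{p..<p + m}. rew M (ost M pl i) (pl ! i))"
      using mT by (intro sum.cong) (auto simp: ep run_episode_eq pl_def)
    also have "\<dots> = val M (ost M pl p) (drop p pl) m"
      using mT lpl by (intro sum_val) simp
    also have "ost M pl p = ost M \<alpha> p"
      by (rule ost_take) (auto simp: pl nth_append la pT)
    also have "drop p pl = seqs W ! j @ replicate T undefined"
      using pl la pT by simp
    also have "val M (ost M \<alpha> p) (seqs W ! j @ replicate T undefined) m = val M (ost M \<alpha> p) (seqs W ! j) m"
      using lenseq[OF j] by (intro val_append) (simp add: m_def)
    finally show ?thesis .
  qed
  define js where "js = best T W (H (T * N)) p"
  have js: "js < N \<and> (\<forall>j'<N. score T W (H (T * N)) p j' \<le> score T W (H (T * N)) p js)"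
    unfolding js_def best_def N_def[symmetric] by (rule someI_ex, rule ex_best, rule N0)
  have ap: "\<alpha> ! p = hd (seqs W ! js)"
  proof -
    have "\<alpha> ! p = take (Suc p) \<alpha> ! p" by simp
    also have "take (Suc p) \<alpha> = chs T W (H (T * N)) (Suc p)"
      unfolding \<alpha>_def H_def N_def using pT by (simp add: take_chs)
    finally show ?thesis by (simp add: nth_append js_def)
  qed
  have mm: "min W (Suc T - Suc p) = m" by (simp add: m_def)
  let ?s = "ost M \<alpha> p"
  obtain w' where w': "length w' = W - 1" "val M ?s (a'#w') m = Qiter M T W (Suc p) ?s a'"
    using Q_char[OF W1, of "Suc p" T M ?s a'] pT mm by auto
  have "a'#w' \<in> set (seqs W :: 'a list list)" using set_seqs[where 'a='a] w' W1 by simp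
  then obtain j' where j': "j' < N" "seqs W ! j' = a'#w'" unfolding N_def by (metis in_set_conv_nth)
  obtain b :: 'a and v where bv: "seqs W ! js = b # v" "length v = W - 1"
  proof -
    have "length (seqs W ! js :: 'a list) = W" using lenseq js by blast
    then show ?thesis using that W1 by (cases "seqs W ! js :: 'a list") auto
  qed
  have "Qiter M T W (Suc p) ?s a' = score T W (H (T * N)) p j'" using sc j' w' by simp
  also have "\<dots> \<le> score T W (H (T * N)) p js" using js j' by blast
  also have "\<dots> = val M ?s (b # v) m" using sc js bv by simp
  also have "\<dots> \<le> Qiter M T W (Suc p) ?s b"
    using Q_char[OF W1, of "Suc p" T M ?s b] pT mm bv by auto
  finally show ?thesis using ap bv by simp
qed

theorem mainTheorem12:
  fixes T W :: nat
  shows "\<exists>alg :: ('s, 'a::finite) rl_alg.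
           \<forall>M :: ('s, 'a) mdp. wf_mdp M \<and> is_eff_window M T W \<longrightarrow>
             sample_complexity M T alg \<le> enat (T^2 * CARD('a)^W)"
proof (intro exI allI impI)
  fix M :: "('s, 'a) mdp"
  assume A: "wf_mdp M \<and> is_eff_window M T W"
  define d where "d = (alg T W :: ('s, 'a) det_alg)"
  define N where "N = length (seqs W :: 'a list list)"
  have NC: "N = CARD('a) ^ W" by (simp add: N_def length_seqs)
  have W1: "1 \<le> W" and WT: "W \<le> T" and wok: "window_ok M T W"
    using A by (auto simp: is_eff_window_def)
  have T1: "1 \<le> T" using W1 WT by simp
  define \<alpha> where "\<alpha> = chs T W (history M T d (T * N)) T"
  define Q where "Q = Qiter M T W"
  define \<pi> where "\<pi> = (\<lambda>t s. if s = ost M \<alpha> (t - 1) then \<alpha> ! (t - 1)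
                               else (SOME a. \<forall>a'. Q t s a' \<le> Q t s a))"
  define \<pi>\<alpha> where "\<pi>\<alpha> = (\<lambda>(t::nat) (s::'s). \<alpha> ! (t - 1))"
  have ps: "pstate M \<pi> n = ost M \<alpha> n" for n
    by (induction n) (auto simp: \<pi>_def)
  have ps2: "pstate M \<pi>\<alpha> n = ost M \<alpha> n" for n
    by (induction n) (auto simp: \<pi>\<alpha>_def)
  have greedy: "\<pi> \<in> greedy_policies M T Q"
    unfolding greedy_policies_def
  proof (intro CollectI ballI allI)
    fix t s a assume t: "t \<in> {1..T}" and "s \<in> states M"
    show "Q t s a \<le> Q t s (\<pi> t s)"
    proof (cases "s = ost M \<alpha> (t - 1)")
      case True
      obtain p where p: "t = Suc p" "p < T" using t by (cases t) auto
      show ?thesis using alpha_greedy[OF W1 p(2), of M a] True p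
        by (simp add: \<pi>_def Q_def \<alpha>_def d_def N_def)
    next
      case False
      have "\<exists>b. \<forall>a'. Q t s a' \<le> Q t s b"
      proof -
        have fin: "finite (range (Q t s))" by simp
        have "Max (range (Q t s)) \<in> range (Q t s)" using fin by (intro Max_in) auto
        then obtain b where "Max (range (Q t s)) = Q t s b" by (metis rangeE)
        then show ?thesis using fin by (metis Max_ge rangeI)
      qed
      from someI_ex[OF this] have "\<forall>a'. Q t s a' \<le> Q t s (SOME b. \<forall>a'. Q t s a' \<le> Q t s b)" .
      then show ?thesis using False by (simp add: \<pi>_def)
    qed
  qed
  have opt: "optimal M T \<pi>" using wok greedy by (simp add: window_ok_def Q_def)
  have Jeq: "J M T \<pi>\<alpha> = J M T \<pi>"
  proof -
    have pa: "\<And>t. \<pi> t (ost M \<alpha> (t - 1)) = \<alpha> ! (t - 1)" by (simp add: \<pi>_def)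
    show ?thesis unfolding J_def by (intro sum.cong) (simp_all only: ps ps2 pa \<pi>\<alpha>_def ps2[unfolded \<pi>\<alpha>_def])
  qed
  have opt2: "optimal M T \<pi>\<alpha>" using opt Jeq by (simp add: optimal_def)
  define n where "n = T^2 * N"
  have ndiv: "n div T = T * N" using T1 by (simp add: n_def power2_eq_square)
  have out: "output_after M T d n = \<pi>\<alpha>"
    by (simp add: output_after_def ndiv d_def alg_def \<pi>\<alpha>_def \<alpha>_def)
  have sp: "success_prob M T (return_pmf d) n \<ge> 1/2"
    using opt2 out by (simp add: success_prob_def)
  have ex: "\<exists>n. success_prob M T (return_pmf d) n \<ge> 1/2" using sp by blast
  have "sample_complexity M T (return_pmf d) = enat (LEAST n. success_prob M T (return_pmf d) n \<ge> 1/2)"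
    using ex by (simp add: sample_complexity_def)
  also have "\<dots> \<le> enat n" using sp by (simp add: Least_le)
  finally show "sample_complexity M T (return_pmf (alg T W)) \<le> enat (T^2 * CARD('a)^W)"
    by (simp add: d_def n_def NC)
qed

end
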